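(* Let $B$ satisfy the conditions on the magnetic field in Assumption 5.1, let $\Phi$ be a flux, $A\in\mathcal A_{\Phi,2\pi}(B)$ and $\hat{\mathbf v}\in\mathbb S^2$. Then, in the sense of distributions on the open set $\Lambda_{\hat{\mathbf v}}$, $$\nabla_x\int_{-\infty}^\infty\hat{\mathbf v}\cdot A(x+\tau\hat{\mathbf v})\,d\tau=\int_{-\infty}^\infty\hat{\mathbf v}\times B(x+\tau\hat{\mathbf v})\,d\tau.$$
   Context: Solid torus $T=\mathbb S^1\times\overline D$; a handlebody with $k\ge1$ handles is a compact oriented 3-manifold with boundary diffeomorphic to the boundary connected sum of $k$ copies of $T$, one with $0$ handles is diffeomorphic to the closed unit ball. $K\subset\mathbb R^3$ compact 3-dimensional submanifold with smooth boundary with handlebody components $K_1,\dots,K_L$ ($N$ handles); $\Lambda=\mathbb R^3\setminus K$. For the $k$-th handle, $\hat\gamma_k=\tilde\gamma_k+\frac\varepsilon2\nu(\tilde\gamma_k)\subset\Lambda$, $\tilde\gamma_k=\partial B_k$ the boundary of a meridian disc, $\nu$ exterior unit normal, $\varepsilon$ small. Magnetic-field part of Assumption 5.1: $B$ bounded real vector field on $\overline\Lambda$, continuous near $\partial K$, $\operatorname{div}B=0$ in $\Lambda$, $\int_{\partial K_j}B\cdot dS=0$ for all $j$, $|B(x)|\le C(1+|x|)^{-\mu}$ with $\mu>2$, and $\operatorname{curl}B$ bounded with $|\operatorname{curl}B(x)|\le C(1+|x|)^{-\mu}$. $\mathcal A_{\Phi,2\pi}(B)$ ($\Phi\in\mathbb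 R^N$): continuous real vector fields $A$ on $\overline\Lambda$ with $|A(x)|\le C(1+|x|)^{-1}$, $\omega(r):=\sup_{x\in\Lambda,|x|\ge r}|A(x)\cdot x/|x||\in L^1(0,\infty)$, $\int_{\hat\gamma_j}A=\Phi_j+2\pi n_j(A)$, $n_j(A)\in\mathbb Z$, $\operatorname{curl}A=B$ in $\Lambda$. $\Lambda_{\hat{\mathbf v}}:=\{x\in\Lambda:x+\tau\hat{\mathbf v}\in\Lambda\ \forall\tau\in\mathbb R\}$. *)

theory Defs
  imports "HOL-Analysis.Analysis"
begin

definition pd :: "3 \<Rightarrow> (real^3 \<Rightarrow> real) \<Rightarrow> real^3 \<Rightarrow> real" where
  "pd i f x = frechet_derivative f (at x) (axis i 1)"

fun iter_pd :: "3 list \<Rightarrow> (real^3 \<Rightarrow> real) \<Rightarrow> real^3 \<Rightarrow> real" where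
  "iter_pd [] f = f"
| "iter_pd (i # is) f = pd i (iter_pd is f)"

text \<open>C-infinity on all of R^3: every iterated partial derivative is (Frechet) differentiable
  everywhere (hence all partial derivatives of all orders exist and are continuous).\<close>
definition smooth3 :: "(real^3 \<Rightarrow> real) \<Rightarrow> bool" where
  "smooth3 f \<longleftrightarrow> (\<forall>is x. iter_pd is f differentiable (at x))"

definition grad3 :: "(real^3 \<Rightarrow> real) \<Rightarrow> real^3 \<Rightarrow> real^3" where
  "grad3 f x = (\<chi> i. pd i f x)"

definition tsupport3 :: "(real^3 \<Rightarrow> 'b::zero) \<Rightarrow> (real^3) set" where
  "tsupport3 f = closure {x. f x \<noteq> 0}"

definition test_fun :: "(real^3) set \<Rightarrow> (real^3 \<Rightarrow> real) \<Rightarrow> bool" where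
  "test_fun U \<phi> \<longleftrightarrow> smooth3 \<phi> \<and> compact (tsupport3 \<phi>) \<and> tsupport3 \<phi> \<subseteq> U"

definition vtest_fun :: "(real^3) set \<Rightarrow> (real^3 \<Rightarrow> real^3) \<Rightarrow> bool" where
  "vtest_fun U \<psi> \<longleftrightarrow> (\<forall>i. smooth3 (\<lambda>x. \<psi> x $ i)) \<and> compact (tsupport3 \<psi>) \<and> tsupport3 \<psi> \<subseteq> U"

definition curl3 :: "(real^3 \<Rightarrow> real^3) \<Rightarrow> real^3 \<Rightarrow> real^3" where
  "curl3 \<psi> x = vector [
      pd 2 (\<lambda>y. \<psi> y $ 3) x - pd 3 (\<lambda>y. \<psi> y $ 2) x,
      pd 3 (\<lambda>y. \<psi> y $ 1) x - pd 1 (\<lambda>y. \<psi> y $ 3) x,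
      pd 1 (\<lambda>y. \<psi> y $ 2) x - pd 2 (\<lambda>y. \<psi> y $ 1) x]"

definition dist_curl :: "(real^3) set \<Rightarrow> (real^3 \<Rightarrow> real^3) \<Rightarrow> (real^3 \<Rightarrow> real^3) \<Rightarrow> bool" where
  "dist_curl U F G \<longleftrightarrow> (\<forall>\<psi>. vtest_fun U \<psi> \<longrightarrow>
     (\<integral>x. F x \<bullet> curl3 \<psi> x \<partial>lborel) = (\<integral>x. G x \<bullet> \<psi> x \<partial>lborel))"

definition dist_div_free :: "(real^3) set \<Rightarrow> (real^3 \<Rightarrow> real^3) \<Rightarrow> bool" where
  "dist_div_free U F \<longleftrightarrow> (\<forall>\<phi>. test_fun U \<phi> \<longrightarrow> (\<integral>x. F x \<bullet> grad3 \<phi> x \<partial>lborel) = 0)"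

definition dist_grad :: "(real^3) set \<Rightarrow> (real^3 \<Rightarrow> real) \<Rightarrow> (real^3 \<Rightarrow> real^3) \<Rightarrow> bool" where
  "dist_grad U f G \<longleftrightarrow> (\<forall>\<phi>. test_fun U \<phi> \<longrightarrow>
     (\<integral>x. f x *\<^sub>R grad3 \<phi> x \<partial>lborel) = - (\<integral>x. \<phi> x *\<^sub>R G x \<partial>lborel))"

text \<open>K is a compact set whose boundary is a smooth surface, K lying locally on one side:
  locally K = {rho \<le> 0} for a smooth rho with non-vanishing gradient.\<close>
definition smooth_boundary_domain :: "(real^3) set \<Rightarrow> bool" where
  "smooth_boundary_domain K \<longleftrightarrow> compact K \<and>
     (\<forall>p\<in>frontier K. \<exists>U \<rho>. open U \<and> p \<in> U \<and> smooth3 \<rho> \<and> (\<forall>x\<in>U. grad3 \<rho> x \<noteq> 0)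
        \<and> K \<inter> U = {x\<in>U. \<rho> x \<le> 0})"

definition line_int :: "(real^3 \<Rightarrow> real^3) \<Rightarrow> (real \<Rightarrow> real^3) \<Rightarrow> real" where
  "line_int A g = integral {0..1} (\<lambda>t. A (g t) \<bullet> vector_derivative g (at t))"

text \<open>Magnetic-field part of Assumption 5.1 (flux through the boundary components omitted).\<close>
definition magnetic_ok :: "(real^3) set \<Rightarrow> (real^3 \<Rightarrow> real^3) \<Rightarrow> real \<Rightarrow> bool" where
  "magnetic_ok \<Lambda> B \<mu> \<longleftrightarrow>
     B \<in> borel_measurable lborel \<and> bounded (B ` closure \<Lambda>) \<and>
     (\<exists>U. open U \<and> frontier \<Lambda> \<subseteq> U \<and> continuous_on (U \<inter> closure \<Lambda>) B) \<and>
     dist_div_free \<Lambda> B \<and> \<mu> > 2 \<and>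
     (\<exists>C. \<forall>x\<in>\<Lambda>. norm (B x) \<le> C * (1 + norm x) powr (-\<mu>)) \<and>
     (\<exists>cB C. cB \<in> borel_measurable lborel \<and> bounded (cB ` \<Lambda>) \<and> dist_curl \<Lambda> B cB \<and>
        (\<forall>x\<in>\<Lambda>. norm (cB x) \<le> C * (1 + norm x) powr (-\<mu>)))"

text \<open>The class A_{Phi,2pi}(B), with the handle curves given as closed paths gam j, j < N.\<close>
definition vpot_class ::
  "(real^3) set \<Rightarrow> nat \<Rightarrow> (nat \<Rightarrow> real \<Rightarrow> real^3) \<Rightarrow> (nat \<Rightarrow> real) \<Rightarrow> (real^3 \<Rightarrow> real^3)
     \<Rightarrow> (real^3 \<Rightarrow> real^3) set" where
  "vpot_class \<Lambda> N gam \<Phi> B = {A.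
     continuous_on (closure \<Lambda>) A \<and>
     (\<exists>C. \<forall>x\<in>closure \<Lambda>. norm (A x) \<le> C / (1 + norm x)) \<and>
     set_integrable lborel {0<..}
       (\<lambda>r::real. Sup {\<bar>A x \<bullet> (x /\<^sub>R norm x)\<bar> | x. x \<in> \<Lambda> \<and> norm x \<ge> r}) \<and>
     (\<forall>j<N. \<exists>n::int. line_int A (gam j) = \<Phi> j + 2 * pi * of_int n) \<and>
     dist_curl \<Lambda> A B}"

definition Lambda_dir :: "(real^3) set \<Rightarrow> real^3 \<Rightarrow> (real^3) set" where
  "Lambda_dir \<Lambda> v = {x\<in>\<Lambda>. \<forall>\<tau>::real. x + \<tau> *\<^sub>R v \<in> \<Lambda>}"

end

theory Submission
  imports Defs "HOL-Probability.Sinc_Integral"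
begin

lemma pd_transl:
  assumes "\<And>x. g differentiable (at x)"
  shows "pd i (\<lambda>y. c * g (y - w)) x = c * pd i g (x - w)"
proof -
  have "(g has_derivative frechet_derivative g (at (x - w))) (at (x - w))"
    using assms frechet_derivative_works by blast
  moreover have dd: "((\<lambda>y. y - w) has_derivative (\<lambda>h. h)) (at x)"
    by (auto intro!: derivative_eq_intros)
  ultimately have "((\<lambda>y. g (y - w)) has_derivative frechet_derivative g (at (x - w))) (at x)"
    using has_derivative_compose[OF dd, of g] by simp
  then have "((\<lambda>y. c * g (y - w)) has_derivative (\<lambda>h. c * frechet_derivative g (at (x - w)) h)) (at x)"
    by (rule has_derivative_mult_right)
  then show ?thesis unfolding pd_def using frechet_derivative_at by metis
qed

lemma iter_pd_transl:
  assumes "smooth3 g"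
  shows "iter_pd is (\<lambda>y. c * g (y - w)) = (\<lambda>y. c * iter_pd is g (y - w))"
proof (induction "is")
  case Nil then show ?case by simp
next
  case (Cons i "is")
  have d: "\<And>x. iter_pd is g differentiable (at x)" using assms unfolding smooth3_def by blast
  have "iter_pd (i#is) (\<lambda>y. c * g (y - w)) = pd i (\<lambda>y. c * iter_pd is g (y - w))" using Cons by simp
  also have "\<dots> = (\<lambda>y. c * pd i (iter_pd is g) (y - w))" by (rule ext, rule pd_transl[OF d])
  finally show ?case by simp
qed

lemma smooth3_transl:
  assumes "smooth3 g" shows "smooth3 (\<lambda>y. c * g (y - w))"
  unfolding smooth3_def iter_pd_transl[OF assms]
proof (intro allI)
  fix "is" x
  have "iter_pd is g differentiable (at (x - w))" using assms unfolding smooth3_def by blast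
  then have "(\<lambda>y. iter_pd is g (y - w)) differentiable (at x)"
    using differentiable_compose[of "iter_pd is g" "\<lambda>y. y - w" x UNIV] by auto
  then show "(\<lambda>y. c * iter_pd is g (y - w)) differentiable (at x)"
    by (simp add: differentiable_mult differentiable_const)
qed

lemma pd_out_support:
  assumes "x \<notin> tsupport3 g" shows "pd i g x = 0"
proof -
  have o: "open (- tsupport3 g)" unfolding tsupport3_def by auto
  have z: "\<And>y. y \<in> - tsupport3 g \<Longrightarrow> g y = 0" unfolding tsupport3_def using closure_subset[of "{x. g x \<noteq> 0}"] by blast
  have "((\<lambda>y. 0) has_derivative (\<lambda>h. 0)) (at x)" by simp
  then have "(g has_derivative (\<lambda>h. 0)) (at x)"
    by (rule has_derivative_transform_within_open[OF _ o]) (use assms z in auto)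
  then show ?thesis unfolding pd_def using frechet_derivative_at by metis
qed

lemma fd_grad:
  assumes "g differentiable (at z)"
  shows "frechet_derivative g (at z) h = grad3 g z \<bullet> h"
proof -
  have L: "linear (frechet_derivative g (at z))"
    using assms frechet_derivative_works has_derivative_linear by blast
  have "frechet_derivative g (at z) h = frechet_derivative g (at z) (\<Sum>i\<in>UNIV. h$i *\<^sub>R axis i 1)"
    using basis_expansion[of h] by (simp add: scalar_mult_eq_scaleR)
  also have "\<dots> = (\<Sum>i\<in>UNIV. h$i * frechet_derivative g (at z) (axis i 1))"
    using L by (simp add: linear_sum linear_scale)
  also have "\<dots> = grad3 g z \<bullet> h"
    by (simp add: grad3_def pd_def inner_vec_def mult.commute)
  finally show ?thesis .
qed

lemma smooth3_diff: "smooth3 g \<Longrightarrow> g differentiable (at x)"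
  unfolding smooth3_def by (metis iter_pd.simps(1))

lemma smooth3_pd_diff: "smooth3 g \<Longrightarrow> pd i g differentiable (at x)"
  unfolding smooth3_def by (metis iter_pd.simps)

lemma cross_identity:
  fixes a d v :: "real^3"
  shows "a \<bullet> cross3 d (cross3 v (axis k 1)) = (a \<bullet> v) * (d $ k) - (a $ k) * (d \<bullet> v)"
  using exhaust_3[of k] by (auto simp: cross3_simps axis_def)

lemma cross_identity2:
  fixes b v :: "real^3"
  shows "b \<bullet> cross3 v (axis k 1) = - (cross3 v b $ k)"
  using exhaust_3[of k] by (auto simp: cross3_simps axis_def)

lemma tsupport_transl:
  fixes \<psi> :: "real^3 \<Rightarrow> real^3"
  assumes "\<And>y. \<psi> y \<noteq> 0 \<Longrightarrow> \<phi> (y - w) \<noteq> (0::real)"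
  shows "tsupport3 \<psi> \<subseteq> (\<lambda>x. w + x) ` tsupport3 \<phi>"
proof -
  have "{y. \<psi> y \<noteq> 0} \<subseteq> (\<lambda>x. w + x) ` {x. \<phi> x \<noteq> 0}"
  proof
    fix y assume "y \<in> {y. \<psi> y \<noteq> 0}"
    then have "\<phi> (y - w) \<noteq> 0" using assms by auto
    then show "y \<in> (\<lambda>x. w + x) ` {x. \<phi> x \<noteq> 0}" by (intro image_eqI[of _ _ "y - w"]) auto
  qed
  then have "closure {y. \<psi> y \<noteq> 0} \<subseteq> closure ((\<lambda>x. w + x) ` {x. \<phi> x \<noteq> 0})"
    by (rule closure_mono)
  then show ?thesis unfolding tsupport3_def closure_translation .
qed

lemma E_tau:
  fixes \<Lambda> :: "(real^3) set" and A B :: "real^3 \<Rightarrow> real^3"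
  assumes dc: "dist_curl \<Lambda> A B" and sm: "smooth3 \<phi>" and cp: "compact (tsupport3 \<phi>)"
    and sub: "(\<lambda>x. w + x) ` tsupport3 \<phi> \<subseteq> \<Lambda>"
  shows "(\<integral>y. (A y \<bullet> v) * pd k \<phi> (y - w) - A y $ k * (grad3 \<phi> (y - w) \<bullet> v) \<partial>lborel)
       = (\<integral>y. - (\<phi> (y - w) * (cross3 v (B y) $ k)) \<partial>lborel)"
proof -
  define c where "c = cross3 v (axis k 1)"
  define \<psi> where "\<psi> = (\<lambda>y. (\<chi> j. c $ j * \<phi> (y - w)) :: real^3)"
  have d: "\<And>x. \<phi> differentiable (at x)" using sm smooth3_diff by blast
  have comp: "\<And>j. (\<lambda>y. \<psi> y $ j) = (\<lambda>y. c $ j * \<phi> (y - w))" unfolding \<psi>_def by simp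
  have ts: "tsupport3 \<psi> \<subseteq> (\<lambda>x. w + x) ` tsupport3 \<phi>"
    by (rule tsupport_transl) (auto simp: \<psi>_def vec_eq_iff)
  have "compact ((\<lambda>x. w + x) ` tsupport3 \<phi>)" using cp by (rule compact_translation)
  then have "compact (tsupport3 \<psi>)"
    using ts by (metis closed_closure compact_Int_closed inf.absorb_iff2 tsupport3_def)
  then have vt: "vtest_fun \<Lambda> \<psi>" unfolding vtest_fun_def comp
    using smooth3_transl[OF sm] ts sub by auto
  have pdc: "\<And>i j y. pd i (\<lambda>y. \<psi> y $ j) y = c $ j * pd i \<phi> (y - w)"
    unfolding comp by (rule pd_transl[OF d])
  have curl: "\<And>y. curl3 \<psi> y = cross3 (grad3 \<phi> (y - w)) c"
    unfolding curl3_def pdc by (simp add: cross3_def grad3_def mult.commute)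
  have "(\<integral>y. A y \<bullet> curl3 \<psi> y \<partial>lborel) = (\<integral>y. B y \<bullet> \<psi> y \<partial>lborel)"
    using dc vt unfolding dist_curl_def by blast
  moreover have "\<And>y. A y \<bullet> curl3 \<psi> y = (A y \<bullet> v) * pd k \<phi> (y - w) - A y $ k * (grad3 \<phi> (y - w) \<bullet> v)"
    unfolding curl c_def cross_identity by (simp add: grad3_def)
  moreover have "\<And>y. B y \<bullet> \<psi> y = - (\<phi> (y - w) * (cross3 v (B y) $ k))"
  proof -
    fix y
    have "\<psi> y = \<phi> (y - w) *\<^sub>R c" unfolding \<psi>_def by (simp add: vec_eq_iff mult.commute)
    then show "B y \<bullet> \<psi> y = - (\<phi> (y - w) * (cross3 v (B y) $ k))"
      unfolding c_def by (simp add: cross_identity2)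
  qed
  ultimately show ?thesis by simp
qed

lemma lborel_transl: "lborel = distr lborel borel (\<lambda>x. w + x :: 'a::euclidean_space)"
  using lborel_affine[of 1 w] by (simp add: density_1)

lemma integral_transl:
  fixes f :: "'a::euclidean_space \<Rightarrow> real"
  assumes [measurable]: "f \<in> borel_measurable borel"
  shows "(\<integral>y. f y \<partial>lborel) = (\<integral>x. f (w + x) \<partial>lborel)"
proof -
  have "(\<integral>y. f y \<partial>lborel) = (\<integral>y. f y \<partial>(distr lborel borel (\<lambda>x. w + x)))"
    by (subst lborel_transl[of w]) simp
  also have "\<dots> = (\<integral>x. f (w + x) \<partial>lborel)"
    by (rule integral_distr) auto
  finally show ?thesis .
qed

lemma integrable_transl:
  fixes f :: "'a::euclidean_space \<Rightarrow> real"
  assumes [measurable]: "f \<in> borel_measurable borel"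
  shows "integrable lborel (\<lambda>x. f (w + x)) \<longleftrightarrow> integrable lborel f"
proof -
  have "integrable lborel f \<longleftrightarrow> integrable (distr lborel borel (\<lambda>x. w + x)) f"
    by (subst lborel_transl[of w]) simp
  also have "\<dots> \<longleftrightarrow> integrable lborel (\<lambda>x. f (w + x))"
    by (rule integrable_distr_eq) auto
  finally show ?thesis by simp
qed

lemma pps: "pair_sigma_finite (lborel :: real measure) (lborel :: (real^3) measure)"
  by (simp add: pair_sigma_finite_def lborel.sigma_finite_measure_axioms)

lemma fub:
  fixes G :: "real \<Rightarrow> real^3 \<Rightarrow> real"
  assumes Gm: "case_prod G \<in> borel_measurable (lborel \<Otimes>\<^sub>M lborel)"
    and h: "integrable lborel h" and D: "integrable lborel D"
    and bd: "\<And>t x. \<bar>G t x\<bar> \<le> h t * \<bar>D x\<bar>"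
  shows "integrable (lborel \<Otimes>\<^sub>M lborel) (case_prod G)"
    and "integrable lborel (\<lambda>t. \<integral>x. G t x \<partial>lborel)"
    and "integrable lborel (\<lambda>x. \<integral>t. G t x \<partial>lborel)"
    and "(\<integral>t. (\<integral>x. G t x \<partial>lborel) \<partial>lborel) = (\<integral>x. (\<integral>t. G t x \<partial>lborel) \<partial>lborel)"
proof -
  have [measurable]: "h \<in> borel_measurable borel" "D \<in> borel_measurable borel"
    using h D by auto
  have I: "integrable (lborel \<Otimes>\<^sub>M lborel) (\<lambda>(t, x). h t * \<bar>D x\<bar>)"
  proof (rule pair_sigma_finite.Fubini_integrable[OF pps])
    show "(\<lambda>(t, x). h t * \<bar>D x\<bar>) \<in> borel_measurable (lborel \<Otimes>\<^sub>M lborel)" by measurable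
    show "integrable lborel (\<lambda>t. \<integral>x. norm (case (t, x) of (t, x) \<Rightarrow> h t * \<bar>D x\<bar>) \<partial>lborel)"
      using h by (simp add: abs_mult)
    show "AE t in lborel. integrable lborel (\<lambda>x. case (t, x) of (t, x) \<Rightarrow> h t * \<bar>D x\<bar>)"
      using D by auto
  qed
  show GI: "integrable (lborel \<Otimes>\<^sub>M lborel) (case_prod G)"
  proof (rule Bochner_Integration.integrable_bound[OF I Gm])
    show "AE p in lborel \<Otimes>\<^sub>M lborel. norm (case p of (t, x) \<Rightarrow> G t x) \<le> norm (case p of (t, x) \<Rightarrow> h t * \<bar>D x\<bar>)"
      using bd by (auto split: prod.splits intro!: AE_I2 order.trans[OF _ abs_ge_self])
  qed
  show "integrable lborel (\<lambda>t. \<integral>x. G t x \<partial>lborel)" using pair_sigma_finite.integrable_fst[OF pps GI] .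
  show "integrable lborel (\<lambda>x. \<integral>t. G t x \<partial>lborel)" using pair_sigma_finite.integrable_snd[OF pps GI] .
  show "(\<integral>t. (\<integral>x. G t x \<partial>lborel) \<partial>lborel) = (\<integral>x. (\<integral>t. G t x \<partial>lborel) \<partial>lborel)"
    using pair_sigma_finite.Fubini_integral[OF pps GI] by simp
qed

lemma q_int: "integrable lborel (\<lambda>t::real. inverse (1 + t^2))"
  using integrable_inverse_1_plus_square by (simp add: set_integrable_def)

lemma q_pos: "0 < inverse (1 + (t::real)^2)"
  by (simp add: add_pos_nonneg)

lemma geo:
  fixes x v y :: "real^3" and t s :: real
  assumes v: "norm v = 1" and s: "\<bar>s\<bar> = 1" and st: "s * \<bar>t\<bar> = t" and y: "y = x + t *\<^sub>R v" and y0: "y \<noteq> 0"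
  shows "norm (s *\<^sub>R v - y /\<^sub>R norm y) \<le> 2 * norm x / norm y"
proof -
  have ny: "norm y > 0" using y0 by simp
  have "s *\<^sub>R v - y /\<^sub>R norm y = (1 / norm y) *\<^sub>R ((s * norm y - t) *\<^sub>R v - x)"
    using ny by (simp add: y algebra_simps divide_simps)
  then have e: "norm (s *\<^sub>R v - y /\<^sub>R norm y) = norm ((s * norm y - t) *\<^sub>R v - x) / norm y"
    using ny by simp
  have tt: "\<bar>norm y - \<bar>t\<bar>\<bar> \<le> norm x"
  proof -
    have "norm (t *\<^sub>R v) = \<bar>t\<bar>" using v by simp
    moreover have "\<bar>norm y - norm (t *\<^sub>R v)\<bar> \<le> norm (y - t *\<^sub>R v)" by (rule norm_triangle_ineq3)
    ultimately show ?thesis using y v by simp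
  qed
  have "s * norm y - t = s * (norm y - \<bar>t\<bar>)" using st by (simp add: algebra_simps)
  then have "\<bar>s * norm y - t\<bar> \<le> norm x" using s tt by (simp add: abs_mult)
  then have "norm ((s * norm y - t) *\<^sub>R v - x) \<le> 2 * norm x"
    using v norm_triangle_ineq4[of "(s * norm y - t) *\<^sub>R v" x] by simp
  then show ?thesis unfolding e using ny by (simp add: divide_right_mono)
qed

lemma real_tail_bound:
  fixes a b C M ny t :: real
  assumes C: "C \<ge> 0" and M: "M \<ge> 0" and a: "0 \<le> a" "a \<le> 2 * M / ny" and b: "0 \<le> b" "b \<le> C / (1 + ny)"
    and ny: "ny \<ge> \<bar>t\<bar> / 2" and t: "\<bar>t\<bar> \<ge> 1"
  shows "a * b \<le> 16 * M * C * inverse (1 + t^2)"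
proof -
  have ny0: "ny > 0" using ny t by linarith
  have "a * b \<le> (2 * M / ny) * (C / (1 + ny))" using a b by (intro mult_mono) auto
  also have "\<dots> \<le> (2 * M / ny) * (C / ny)"
    using ny0 C M by (intro mult_left_mono divide_left_mono) auto
  also have "\<dots> = 2 * M * C / ny^2" by (simp add: power2_eq_square)
  also have "\<dots> \<le> 2 * M * C / (t^2 / 4)"
  proof (rule divide_left_mono)
    have "(\<bar>t\<bar> / 2)^2 \<le> ny^2" using ny by (intro power_mono) auto
    then show "t^2 / 4 \<le> ny^2" by (simp add: power_divide)
  qed (use C M t ny0 in auto)
  also have "\<dots> = 8 * M * C / t^2" by simp
  also have "\<dots> \<le> 8 * M * C * (2 / (1 + t^2))"
  proof -
    have t2: "t^2 \<ge> 1" using t by (metis abs_ge_zero one_le_power power2_abs)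
    have "1 / t^2 \<le> 2 / (1 + t^2)" using t2 by (simp add: divide_simps)
    then show ?thesis using C M
      by (metis (no_types, lifting) mult_left_mono split_mult_pos_le times_divide_eq_right mult.right_neutral zero_le_numeral mult_nonneg_nonneg)
  qed
  also have "\<dots> = 16 * M * C * inverse (1 + t^2)" by (simp add: divide_simps)
  finally show ?thesis .
qed

lemma LB_A:
  fixes A :: "real^3 \<Rightarrow> real^3" and \<Lambda> :: "(real^3) set" and v :: "real^3"
  assumes v: "norm v = 1" and M: "M \<ge> 0" and Ab: "\<forall>x\<in>\<Lambda>. norm (A x) \<le> C / (1 + norm x)"
    and wi: "set_integrable lborel {0<..}
       (\<lambda>r::real. Sup {\<bar>A x \<bullet> (x /\<^sub>R norm x)\<bar> | x. x \<in> \<Lambda> \<and> norm x \<ge> r})"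
  shows "\<exists>h. integrable lborel h \<and> (\<forall>x t. norm x \<le> M \<longrightarrow> x + t *\<^sub>R v \<in> \<Lambda> \<longrightarrow> \<bar>v \<bullet> A (x + t *\<^sub>R v)\<bar> \<le> h t)"
proof -
  define \<omega> where "\<omega> = (\<lambda>r::real. Sup {\<bar>A x \<bullet> (x /\<^sub>R norm x)\<bar> | x. x \<in> \<Lambda> \<and> norm x \<ge> r})"
  define w where "w = (\<lambda>r. indicator {0<..} r * \<omega> r)"
  have wint: "integrable lborel w" using wi unfolding set_integrable_def w_def \<omega>_def by simp
  have w1: "integrable lborel (\<lambda>t. w (t - M))"
    using lborel_integrable_real_affine[OF wint, of 1 "-M"] by (simp add: add.commute)
  have w2: "integrable lborel (\<lambda>t. w (- t - M))"
    using lborel_integrable_real_affine[OF wint, of "-1" "-M"] by (simp add: add.commute)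
  define L where "L = 2 * M + 1"
  define K where "K = \<bar>C\<bar> * (1 + L^2) + 16 * M * \<bar>C\<bar>"
  define h where "h = (\<lambda>t. K * inverse (1 + t^2) + \<bar>w (t - M)\<bar> + \<bar>w (- t - M)\<bar>)"
  have hint: "integrable lborel h" unfolding h_def
    using q_int w1 w2 by (intro Bochner_Integration.integrable_add integrable_mult_right Bochner_Integration.integrable_abs) auto
  have bound: "\<bar>v \<bullet> A (x + t *\<^sub>R v)\<bar> \<le> h t" if nx: "norm x \<le> M" and yl: "x + t *\<^sub>R v \<in> \<Lambda>" for x t
  proof -
    define y where "y = x + t *\<^sub>R v"
    have yL: "y \<in> \<Lambda>" using yl y_def by simp
    have Ay: "norm (A y) \<le> C / (1 + norm y)" using Ab yL by blast
    have C0: "C \<ge> 0"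
    proof -
      have "0 \<le> C / (1 + norm y)" using Ay norm_ge_zero order.trans by blast
      then show ?thesis by (simp add: zero_le_divide_iff) (smt (verit) norm_ge_zero)
    qed
    have divC: "\<And>z::real^3. C / (1 + norm z) \<le> C"
    proof -
      fix z :: "real^3"
      have "C / (1 + norm z) \<le> C / 1" using C0 by (intro divide_left_mono) (auto simp: add_pos_nonneg)
      then show "C / (1 + norm z) \<le> C" by simp
    qed
    have AyC: "norm (A y) \<le> C"
      using Ay divC[of y] by linarith
    have hge: "K * inverse (1 + t^2) \<le> h t" unfolding h_def by simp
    have vA: "\<bar>v \<bullet> A y\<bar> \<le> norm (A y)" using Cauchy_Schwarz_ineq2[of v "A y"] v by simp
    show ?thesis
    proof (cases "\<bar>t\<bar> \<le> L")
      case True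
      have "t^2 \<le> L^2" using True by (metis abs_ge_zero power2_abs power_mono)
      then have "C \<le> C * (1 + L^2) * inverse (1 + t^2)"
        using C0 by (simp add: field_simps add_pos_nonneg mult_left_mono)
      also have "\<dots> \<le> K * inverse (1 + t^2)"
        unfolding K_def using C0 M q_pos[of t] by (intro mult_right_mono) auto
      finally have "\<bar>v \<bullet> A y\<bar> \<le> h t" using vA AyC hge by linarith
      then show ?thesis by (simp add: y_def)
    next
      case False
      define s where "s = sgn t"
      have s1: "\<bar>s\<bar> = 1" using False L_def M by (auto simp: s_def abs_sgn)
      have st: "s * \<bar>t\<bar> = t" by (simp add: s_def sgn_mult_abs)
      have "\<bar>t\<bar> = norm (t *\<^sub>R v)" using v by simp
      also have "\<dots> \<le> norm y + norm x" using norm_triangle_ineq4[of y x] by (simp add: y_def)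
      finally have nyt: "norm y \<ge> \<bar>t\<bar> - M" using nx by linarith
      have ny2: "norm y \<ge> \<bar>t\<bar> / 2" using nyt False L_def M by linarith
      have y0: "y \<noteq> 0" using ny2 False L_def M by auto
      have g: "norm (s *\<^sub>R v - y /\<^sub>R norm y) \<le> 2 * M / norm y"
        using geo[OF v s1 st y_def y0] nx y0 by (smt (verit) divide_right_mono norm_ge_zero)
      have "\<bar>v \<bullet> A y\<bar> = \<bar>(s *\<^sub>R v) \<bullet> A y\<bar>" using s1 by (simp add: abs_mult)
      also have "(s *\<^sub>R v) \<bullet> A y = A y \<bullet> (y /\<^sub>R norm y) + (s *\<^sub>R v - y /\<^sub>R norm y) \<bullet> A y"
        unfolding inner_diff_left by (simp add: inner_commute)
      finally have split: "\<bar>v \<bullet> A y\<bar> \<le> \<bar>A y \<bullet> (y /\<^sub>R norm y)\<bar> + norm (s *\<^sub>R v - y /\<^sub>R norm y) * norm (A y)"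
        using Cauchy_Schwarz_ineq2[of "s *\<^sub>R v - y /\<^sub>R norm y" "A y"] by linarith
      have om: "\<bar>A y \<bullet> (y /\<^sub>R norm y)\<bar> \<le> \<omega> (\<bar>t\<bar> - M)"
        unfolding \<omega>_def
      proof (rule cSup_upper)
        show "\<bar>A y \<bullet> (y /\<^sub>R norm y)\<bar> \<in> {\<bar>A x \<bullet> (x /\<^sub>R norm x)\<bar> |x. x \<in> \<Lambda> \<and> \<bar>t\<bar> - M \<le> norm x}"
          using yL nyt by blast
        show "bdd_above {\<bar>A x \<bullet> (x /\<^sub>R norm x)\<bar> |x. x \<in> \<Lambda> \<and> \<bar>t\<bar> - M \<le> norm x}"
        proof (rule bdd_aboveI, clarify)
          fix z assume zL: "z \<in> \<Lambda>"
          have "\<bar>A z \<bullet> (z /\<^sub>R norm z)\<bar> \<le> norm (A z) * norm (z /\<^sub>R norm z)" by (rule Cauchy_Schwarz_ineq2)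
          also have "\<dots> \<le> norm (A z) * 1"
          proof (intro mult_left_mono)
            show "norm (z /\<^sub>R norm z) \<le> 1" by (cases "z = 0") auto
          qed auto
          also have "\<dots> \<le> C" using Ab zL divC[of z] by force
          finally show "\<bar>A z \<bullet> (z /\<^sub>R norm z)\<bar> \<le> C" .
        qed
      qed
      have om2: "\<omega> (\<bar>t\<bar> - M) \<le> \<bar>w (t - M)\<bar> + \<bar>w (- t - M)\<bar>"
      proof (cases "t > 0")
        case True
        then have "\<omega> (\<bar>t\<bar> - M) = w (t - M)" using False L_def M by (simp add: w_def)
        then show ?thesis by simp
      next
        case f2: False
        then have "\<omega> (\<bar>t\<bar> - M) = w (- t - M)" using False L_def M by (simp add: w_def)
        then show ?thesis by simp
      qed
      have tail: "norm (s *\<^sub>R v - y /\<^sub>R norm y) * norm (A y) \<le> 16 * M * C * inverse (1 + t^2)"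
        by (rule real_tail_bound[OF C0 M _ g _ Ay ny2]) (use False L_def M in auto)
      have "16 * M * C * inverse (1 + t^2) \<le> K * inverse (1 + t^2)"
        unfolding K_def using C0 M q_pos[of t] by (intro mult_right_mono) auto
      then show ?thesis using split om om2 tail unfolding h_def y_def by linarith
    qed
  qed
  show ?thesis using hint bound by blast
qed

lemma LB_B:
  fixes B :: "real^3 \<Rightarrow> real^3" and \<Lambda> :: "(real^3) set" and v :: "real^3"
  assumes v: "norm v = 1" and M: "M \<ge> 0" and mu: "\<mu> > 2"
    and Bb: "\<forall>x\<in>\<Lambda>. norm (B x) \<le> C * (1 + norm x) powr (-\<mu>)"
  shows "\<exists>h. integrable lborel h \<and> (\<forall>x t. norm x \<le> M \<longrightarrow> x + t *\<^sub>R v \<in> \<Lambda> \<longrightarrow> norm (B (x + t *\<^sub>R v)) \<le> h t)"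
proof -
  define h where "h = (\<lambda>t::real. \<bar>C\<bar> * (1 + M)^2 * inverse (1 + t^2))"
  have hint: "integrable lborel h" unfolding h_def using q_int by (intro integrable_mult_right)
  have bound: "norm (B (x + t *\<^sub>R v)) \<le> h t" if nx: "norm x \<le> M" and yl: "x + t *\<^sub>R v \<in> \<Lambda>" for x t
  proof -
    define y where "y = x + t *\<^sub>R v"
    have By: "norm (B y) \<le> C * (1 + norm y) powr (-\<mu>)" using Bb yl y_def by blast
    have "\<bar>t\<bar> = norm (t *\<^sub>R v)" using v by simp
    also have "\<dots> \<le> norm y + norm x" using norm_triangle_ineq4[of y x] by (simp add: y_def)
    finally have nyt: "\<bar>t\<bar> \<le> norm y + M" using nx by linarith
    have p1: "(1 + norm y) powr (-\<mu>) \<le> (1 + norm y) powr (-2)"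
      using mu by (intro powr_mono) auto
    have p2: "(1 + norm y) powr (-2) = inverse ((1 + norm y)^2)"
    proof -
      have b: "0 < 1 + norm y" by (simp add: add_pos_nonneg)
      have "(1 + norm y) powr (-2) = inverse ((1 + norm y) powr 2)" using powr_minus[of "1 + norm y" 2] by simp
      also have "(1 + norm y) powr 2 = (1 + norm y)^2" using powr_numeral[OF less_imp_le[OF b], of "num.Bit0 num.One"] by simp
      finally show ?thesis .
    qed
    have "(1 + M) * (1 + norm y) = 1 + M + norm y + M * norm y" by (simp add: algebra_simps)
    moreover have "M * norm y \<ge> 0" using M by simp
    ultimately have le1: "1 + \<bar>t\<bar> \<le> (1 + M) * (1 + norm y)" using nyt by linarith
    have "1 + t^2 \<le> (1 + \<bar>t\<bar>)^2" by (simp add: power2_eq_square algebra_simps)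
    also have "\<dots> \<le> ((1 + M) * (1 + norm y))^2" using le1 by (intro power_mono) auto
    finally have sq: "1 + t^2 \<le> (1 + M)^2 * (1 + norm y)^2" by (simp add: power_mult_distrib)
    have p3: "inverse ((1 + norm y)^2) \<le> (1 + M)^2 * inverse (1 + t^2)"
    proof -
      have b: "0 < 1 + norm y" by (simp add: add_pos_nonneg)
      have pos: "0 < (1 + norm y)^2" "0 < 1 + t^2" using zero_less_power[OF b, of 2] by (auto simp: add_pos_nonneg)
      have "1 + norm y \<noteq> 0" using b by simp
      then show ?thesis using sq pos by (simp add: field_simps)
    qed
    have "norm (B y) \<le> \<bar>C\<bar> * (1 + norm y) powr (-\<mu>)" using By by (smt (verit) mult_right_mono powr_ge_zero)
    also have "\<dots> \<le> \<bar>C\<bar> * inverse ((1 + norm y)^2)" using p1 p2 by (intro mult_left_mono) auto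
    also have "\<dots> \<le> \<bar>C\<bar> * ((1 + M)^2 * inverse (1 + t^2))" using p3 by (intro mult_left_mono) auto
    finally show ?thesis unfolding h_def y_def by (simp add: mult.assoc)
  qed
  show ?thesis using hint bound by blast
qed

lemma nice_int:
  fixes g :: "real^3 \<Rightarrow> real"
  assumes c: "continuous_on UNIV g" and S: "compact S" and z: "\<And>x. x \<notin> S \<Longrightarrow> g x = 0"
  shows "integrable lborel g"
proof -
  have "integrable lborel (\<lambda>x. indicator S x *\<^sub>R g x)"
    using borel_integrable_compact[OF S continuous_on_subset[OF c]] by auto
  moreover have "(\<lambda>x. indicator S x *\<^sub>R g x) = g" using z by (auto simp: indicator_def fun_eq_iff)
  ultimately show ?thesis by simp
qed

lemma nice_bdd:
  fixes g :: "real^3 \<Rightarrow> real"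
  assumes c: "continuous_on UNIV g" and S: "compact S" and z: "\<And>x. x \<notin> S \<Longrightarrow> g x = 0"
  shows "\<exists>b\<ge>0. \<forall>x. \<bar>g x\<bar> \<le> b"
proof -
  have "compact (g ` S)" by (rule compact_continuous_image[OF continuous_on_subset[OF c subset_UNIV] S])
  then obtain b where b: "\<forall>y\<in>g ` S. norm y \<le> b" using compact_imp_bounded bounded_iff by metis
  show ?thesis
  proof (rule exI[of _ "\<bar>b\<bar>"], intro conjI allI)
    fix x show "\<bar>g x\<bar> \<le> \<bar>b\<bar>"
    proof (cases "x \<in> S")
      case True then have "norm (g x) \<le> b" using b by blast
      then show ?thesis by simp
    next
      case False then show ?thesis using z by simp
    qed
  qed simp
qed

lemma comp_int:
  fixes F :: "'a \<Rightarrow> real^3"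
  assumes "integrable M F"
  shows "(\<integral>x. F x \<partial>M) $ k = (\<integral>x. F x $ k \<partial>M)"
proof -
  have "(\<integral>x. F x \<bullet> axis k 1 \<partial>M) = (\<integral>x. F x \<partial>M) \<bullet> axis k 1"
    using assms by (rule integral_inner_left)
  then show ?thesis by (simp add: inner_axis)
qed

lemma integrable_Icc: "integrable lborel (indicator {a..b::real} :: real \<Rightarrow> real)"
  using emeasure_compact_finite[OF compact_Icc[of a b]] by (intro integrable_real_indicator) auto

lemma line_FTC:
  fixes \<phi> :: "real^3 \<Rightarrow> real"
  assumes sm: "smooth3 \<phi>" and R: "R \<ge> 0"
  shows "(\<integral>t. indicator {-R..R} t * (grad3 \<phi> (y - t *\<^sub>R v) \<bullet> v) \<partial>lborel) = \<phi> (y + R *\<^sub>R v) - \<phi> (y - R *\<^sub>R v)"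
proof -
  define F where "F = (\<lambda>t. - \<phi> (y - t *\<^sub>R v))"
  have d: "\<And>z. \<phi> differentiable (at z)" using sm smooth3_diff by blast
  have der: "(F has_vector_derivative (grad3 \<phi> (y - t *\<^sub>R v) \<bullet> v)) (at t within {-R..R})" for t
  proof -
    have "(\<phi> has_derivative frechet_derivative \<phi> (at (y - t *\<^sub>R v))) (at (y - t *\<^sub>R v))"
      using d frechet_derivative_works by blast
    moreover have dd: "((\<lambda>s. y - s *\<^sub>R v) has_derivative (\<lambda>h. - (h *\<^sub>R v))) (at t)"
      by (auto intro!: derivative_eq_intros)
    ultimately have "((\<lambda>s. \<phi> (y - s *\<^sub>R v)) has_derivative (\<lambda>h. frechet_derivative \<phi> (at (y - t *\<^sub>R v)) (- (h *\<^sub>R v)))) (at t)"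
      using has_derivative_compose[OF dd, of \<phi>] by simp
    then have a: "(F has_derivative (\<lambda>h. - frechet_derivative \<phi> (at (y - t *\<^sub>R v)) (- (h *\<^sub>R v)))) (at t)"
      unfolding F_def by (rule has_derivative_minus)
    have b: "(\<lambda>h. - frechet_derivative \<phi> (at (y - t *\<^sub>R v)) (- (h *\<^sub>R v))) = (\<lambda>h. h *\<^sub>R (grad3 \<phi> (y - t *\<^sub>R v) \<bullet> v))"
      using fd_grad[OF d] by (auto simp: fun_eq_iff)
    have "(F has_derivative (\<lambda>h. h *\<^sub>R (grad3 \<phi> (y - t *\<^sub>R v) \<bullet> v))) (at t)" using a unfolding b .
    then show ?thesis unfolding has_vector_derivative_def by (rule has_derivative_at_withinI)
  qed
  have cont: "continuous_on {-R..R} (\<lambda>t. grad3 \<phi> (y - t *\<^sub>R v) \<bullet> v)"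
  proof -
    have "\<And>i. continuous_on UNIV (pd i \<phi>)"
      using smooth3_pd_diff[OF sm] by (simp add: continuous_at_imp_continuous_on differentiable_imp_continuous_within)
    then have "continuous_on UNIV (\<lambda>z. grad3 \<phi> z \<bullet> v)"
      unfolding grad3_def inner_vec_def by (auto intro!: continuous_intros)
    moreover have "continuous_on UNIV (\<lambda>t::real. y - t *\<^sub>R v)" by (intro continuous_intros)
    ultimately have "continuous_on UNIV (\<lambda>t. grad3 \<phi> (y - t *\<^sub>R v) \<bullet> v)"
      using continuous_on_compose2[of UNIV "\<lambda>z. grad3 \<phi> z \<bullet> v" UNIV "\<lambda>t::real. y - t *\<^sub>R v"] by auto
    then show ?thesis by (rule continuous_on_subset) auto
  qed
  have "(\<integral>t. indicator {-R..R} t *\<^sub>R (grad3 \<phi> (y - t *\<^sub>R v) \<bullet> v) \<partial>lborel) = F R - F (-R)"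
    by (rule integral_FTC_atLeastAtMost[OF _ der cont]) (use R in auto)
  then show ?thesis unfolding F_def by simp
qed

lemma phi_facts:
  fixes \<phi> :: "real^3 \<Rightarrow> real"
  assumes sm: "smooth3 \<phi>" and S: "S = tsupport3 \<phi>"
  shows "\<And>x. x \<notin> S \<Longrightarrow> \<phi> x = 0"
    and "\<And>x i. x \<notin> S \<Longrightarrow> pd i \<phi> x = 0"
    and "\<And>x. x \<notin> S \<Longrightarrow> grad3 \<phi> x \<bullet> v = 0"
    and "continuous_on UNIV \<phi>"
    and "\<And>i. continuous_on UNIV (pd i \<phi>)"
    and "continuous_on UNIV (\<lambda>x. grad3 \<phi> x \<bullet> v)"
proof -
  show z: "\<And>x. x \<notin> S \<Longrightarrow> \<phi> x = 0" unfolding S tsupport3_def using closure_subset[of "{x. \<phi> x \<noteq> 0}"] by blast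
  show pz: "\<And>x i. x \<notin> S \<Longrightarrow> pd i \<phi> x = 0" unfolding S by (rule pd_out_support)
  show "\<And>x. x \<notin> S \<Longrightarrow> grad3 \<phi> x \<bullet> v = 0" using pz by (simp add: grad3_def inner_vec_def)
  show "continuous_on UNIV \<phi>" using smooth3_diff[OF sm]
    by (simp add: continuous_at_imp_continuous_on differentiable_imp_continuous_within)
  show c: "\<And>i. continuous_on UNIV (pd i \<phi>)" using smooth3_pd_diff[OF sm]
    by (simp add: continuous_at_imp_continuous_on differentiable_imp_continuous_within)
  show "continuous_on UNIV (\<lambda>x. grad3 \<phi> x \<bullet> v)"
    unfolding grad3_def inner_vec_def using c by (auto intro!: continuous_intros)
qed

lemma T_zero:
  fixes A1 :: "real^3 \<Rightarrow> real^3" and \<phi> :: "real^3 \<Rightarrow> real" and v :: "real^3"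
  assumes v: "norm v = 1"
    and A1m[measurable]: "(\<lambda>y. A1 y $ k) \<in> borel_measurable borel"
    and A1b: "\<And>y. \<bar>A1 y $ k\<bar> \<le> Cb"
    and A1dec: "\<And>y. \<bar>A1 y $ k\<bar> \<le> Cd / (1 + norm y)" and Cd: "Cd \<ge> 0"
    and sm: "smooth3 \<phi>" and S: "S = tsupport3 \<phi>" and cS: "compact S"
    and M: "M \<ge> 0" "\<And>x. x \<in> S \<Longrightarrow> norm x \<le> M"
    and Tint: "integrable lborel (\<lambda>t. \<integral>x. A1 (t *\<^sub>R v + x) $ k * (grad3 \<phi> x \<bullet> v) \<partial>lborel)"
  shows "(\<integral>t. (\<integral>x. A1 (t *\<^sub>R v + x) $ k * (grad3 \<phi> x \<bullet> v) \<partial>lborel) \<partial>lborel) = 0"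
proof -
  define Dv where "Dv = (\<lambda>x. grad3 \<phi> x \<bullet> v)"
  define T where "T = (\<lambda>t. \<integral>x. A1 (t *\<^sub>R v + x) $ k * Dv x \<partial>lborel)"
  note pf = phi_facts(1,2,4,5)[OF sm S] phi_facts(3,6)[OF sm S, where v=v]
  have phz: "\<And>x. x \<notin> S \<Longrightarrow> \<phi> x = 0" and Dvz: "\<And>x. x \<notin> S \<Longrightarrow> Dv x = 0"
    using pf unfolding Dv_def by auto
  have phc: "continuous_on UNIV \<phi>" and Dvc: "continuous_on UNIV Dv" using pf unfolding Dv_def by auto
  have [measurable]: "\<phi> \<in> borel_measurable borel" "Dv \<in> borel_measurable borel"
    using phc Dvc by (auto intro: borel_measurable_continuous_onI)
  have phi_int: "integrable lborel \<phi>" by (rule nice_int[OF phc cS phz])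
  obtain bDv where bDv: "bDv \<ge> 0" "\<And>x. \<bar>Dv x\<bar> \<le> bDv" using nice_bdd[OF Dvc cS Dvz] by blast
  have Cb: "Cb \<ge> 0" using A1b[of 0] by linarith
  have Tint': "integrable lborel T" using Tint unfolding T_def Dv_def .
  define J where "J = (\<lambda>n::nat. \<integral>t. indicator {- real n..real n} t * T t \<partial>lborel)"
  define P where "P = (\<integral>x. \<bar>\<phi> x\<bar> \<partial>lborel)"
  have Jeq: "J n = (\<integral>x. A1 (x - real n *\<^sub>R v) $ k * \<phi> x \<partial>lborel) - (\<integral>x. A1 (x + real n *\<^sub>R v) $ k * \<phi> x \<partial>lborel)" for n
  proof -
    define R where "R = real n"
    have R0: "R \<ge> 0" unfolding R_def by simp
    define W where "W = (\<lambda>p::(real^3) \<times> real. fst p + snd p *\<^sub>R v) ` (S \<times> {-R..R})"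
    have cW: "compact W" unfolding W_def
      by (intro compact_continuous_image compact_Times cS compact_Icc continuous_intros)
    define G where "G = (\<lambda>t (y::real^3). indicator {-R..R} t * (A1 y $ k * Dv (y - t *\<^sub>R v)))"
    have Gm: "case_prod G \<in> borel_measurable (lborel \<Otimes>\<^sub>M lborel)" unfolding G_def by measurable
    have Wi: "integrable lborel (\<lambda>y. Cb * bDv * indicator W y)"
      using emeasure_compact_finite[OF cW] borel_closed[OF compact_imp_closed[OF cW]] by (intro integrable_mult_right integrable_real_indicator) auto
    have Gb: "\<bar>G t y\<bar> \<le> indicator {-R..R} t * \<bar>Cb * bDv * indicator W y\<bar>" for t y
    proof (cases "t \<in> {-R..R} \<and> y - t *\<^sub>R v \<in> S")
      case True
      then have "y \<in> W" unfolding W_def by (auto intro!: image_eqI[of _ _ "(y - t *\<^sub>R v, t)"])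
      moreover have "\<bar>A1 y $ k * Dv (y - t *\<^sub>R v)\<bar> \<le> Cb * bDv"
        unfolding abs_mult using A1b bDv Cb by (intro mult_mono) auto
      ultimately show ?thesis using True Cb bDv by (simp add: G_def)
    next
      case False
      then show ?thesis using Dvz by (auto simp: G_def)
    qed
    note F = fub[OF Gm integrable_Icc Wi Gb]
    have in1: "(\<integral>y. G t y \<partial>lborel) = indicator {-R..R} t * T t" for t
    proof -
      have "(\<integral>y. G t y \<partial>lborel) = indicator {-R..R} t * (\<integral>y. A1 y $ k * Dv (y - t *\<^sub>R v) \<partial>lborel)"
        unfolding G_def by simp
      also have "(\<integral>y. A1 y $ k * Dv (y - t *\<^sub>R v) \<partial>lborel) = (\<integral>x. A1 (t *\<^sub>R v + x) $ k * Dv (t *\<^sub>R v + x - t *\<^sub>R v) \<partial>lborel)"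
        by (rule integral_transl) measurable
      also have "\<dots> = T t" unfolding T_def by simp
      finally show ?thesis .
    qed
    have in2: "(\<integral>t. G t y \<partial>lborel) = A1 y $ k * (\<phi> (y + R *\<^sub>R v) - \<phi> (y - R *\<^sub>R v))" for y
    proof -
      have "(\<integral>t. G t y \<partial>lborel) = A1 y $ k * (\<integral>t. indicator {-R..R} t * Dv (y - t *\<^sub>R v) \<partial>lborel)"
        unfolding G_def by (simp add: mult.left_commute)
      also have "(\<integral>t. indicator {-R..R} t * Dv (y - t *\<^sub>R v) \<partial>lborel) = \<phi> (y + R *\<^sub>R v) - \<phi> (y - R *\<^sub>R v)"
        unfolding Dv_def by (rule line_FTC[OF sm R0])
      finally show ?thesis .
    qed
    have "J n = (\<integral>y. A1 y $ k * (\<phi> (y + R *\<^sub>R v) - \<phi> (y - R *\<^sub>R v)) \<partial>lborel)"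
      using F(4) unfolding J_def R_def[symmetric] in1 in2 .
    also have "\<dots> = (\<integral>y. A1 y $ k * \<phi> (y + R *\<^sub>R v) \<partial>lborel) - (\<integral>y. A1 y $ k * \<phi> (y - R *\<^sub>R v) \<partial>lborel)"
    proof -
      have i: "integrable lborel (\<lambda>y. A1 y $ k * \<phi> (y + c *\<^sub>R v))" for c
      proof (rule Bochner_Integration.integrable_bound)
        have "integrable lborel (\<lambda>y. \<phi> (c *\<^sub>R v + y))" using integrable_transl[of \<phi>] phi_int by simp
        then show "integrable lborel (\<lambda>y. Cb * \<phi> (y + c *\<^sub>R v))" by (simp add: add.commute)
        show "(\<lambda>y. A1 y $ k * \<phi> (y + c *\<^sub>R v)) \<in> borel_measurable lborel" by measurable
        show "AE y in lborel. norm (A1 y $ k * \<phi> (y + c *\<^sub>R v)) \<le> norm (Cb * \<phi> (y + c *\<^sub>R v))"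
          using A1b Cb by (auto simp: abs_mult intro!: mult_right_mono)
      qed
      show ?thesis using i[of R] i[of "-R"] by (simp add: algebra_simps)
    qed
    also have "(\<integral>y. A1 y $ k * \<phi> (y + R *\<^sub>R v) \<partial>lborel) = (\<integral>x. A1 (x - R *\<^sub>R v) $ k * \<phi> x \<partial>lborel)"
    proof -
      have "(\<integral>y. A1 y $ k * \<phi> (y + R *\<^sub>R v) \<partial>lborel) = (\<integral>x. A1 (- R *\<^sub>R v + x) $ k * \<phi> (- R *\<^sub>R v + x + R *\<^sub>R v) \<partial>lborel)"
        by (rule integral_transl) measurable
      moreover have "\<And>x. - R *\<^sub>R v + x + R *\<^sub>R v = x" "\<And>x. - R *\<^sub>R v + x = x - R *\<^sub>R v" by auto
      ultimately show ?thesis by simp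
    qed
    also have "(\<integral>y. A1 y $ k * \<phi> (y - R *\<^sub>R v) \<partial>lborel) = (\<integral>x. A1 (x + R *\<^sub>R v) $ k * \<phi> x \<partial>lborel)"
    proof -
      have "(\<integral>y. A1 y $ k * \<phi> (y - R *\<^sub>R v) \<partial>lborel) = (\<integral>x. A1 (R *\<^sub>R v + x) $ k * \<phi> (R *\<^sub>R v + x - R *\<^sub>R v) \<partial>lborel)"
        by (rule integral_transl) measurable
      moreover have "\<And>x. R *\<^sub>R v + x - R *\<^sub>R v = x" "\<And>x. R *\<^sub>R v + x = x + R *\<^sub>R v" by auto
      ultimately show ?thesis by simp
    qed
    finally show ?thesis unfolding R_def .
  qed
  have bnd1: "\<bar>\<integral>x. A1 (x + c *\<^sub>R v) $ k * \<phi> x \<partial>lborel\<bar> \<le> Cd / (1 + (\<bar>c\<bar> - M)) * P" if c: "\<bar>c\<bar> \<ge> M" for c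
  proof -
    have pos: "0 < 1 + (\<bar>c\<bar> - M)" using c by simp
    have pw: "\<bar>A1 (x + c *\<^sub>R v) $ k * \<phi> x\<bar> \<le> Cd / (1 + (\<bar>c\<bar> - M)) * \<bar>\<phi> x\<bar>" for x
    proof (cases "x \<in> S")
      case True
      have "\<bar>c\<bar> = norm (c *\<^sub>R v)" using v by simp
      also have "\<dots> \<le> norm (x + c *\<^sub>R v) + norm x" using norm_triangle_ineq4[of "x + c *\<^sub>R v" x] by simp
      finally have "norm (x + c *\<^sub>R v) \<ge> \<bar>c\<bar> - M" using M(2)[OF True] by linarith
      then have "Cd / (1 + norm (x + c *\<^sub>R v)) \<le> Cd / (1 + (\<bar>c\<bar> - M))"
        using Cd pos by (intro divide_left_mono) auto
      then have "\<bar>A1 (x + c *\<^sub>R v) $ k\<bar> \<le> Cd / (1 + (\<bar>c\<bar> - M))" using A1dec order.trans by blast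
      then show ?thesis unfolding abs_mult by (intro mult_right_mono) auto
    next
      case False then show ?thesis using phz by simp
    qed
    have "\<bar>\<integral>x. A1 (x + c *\<^sub>R v) $ k * \<phi> x \<partial>lborel\<bar> \<le> (\<integral>x. Cd / (1 + (\<bar>c\<bar> - M)) * \<bar>\<phi> x\<bar> \<partial>lborel)"
    proof (rule integral_abs_bound_integral)
      show "integrable lborel (\<lambda>x. Cd / (1 + (\<bar>c\<bar> - M)) * \<bar>\<phi> x\<bar>)" using phi_int by auto
      show "integrable lborel (\<lambda>x. A1 (x + c *\<^sub>R v) $ k * \<phi> x)"
      proof (rule Bochner_Integration.integrable_bound)
        show "integrable lborel (\<lambda>x. Cb * \<phi> x)" using phi_int by auto
        show "(\<lambda>x. A1 (x + c *\<^sub>R v) $ k * \<phi> x) \<in> borel_measurable lborel" by measurable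
        show "AE x in lborel. norm (A1 (x + c *\<^sub>R v) $ k * \<phi> x) \<le> norm (Cb * \<phi> x)"
          using A1b Cb by (auto simp: abs_mult intro!: mult_right_mono)
      qed
    qed (use pw in auto)
    also have "\<dots> = Cd / (1 + (\<bar>c\<bar> - M)) * P" unfolding P_def by simp
    finally show ?thesis .
  qed
  have Jb: "\<bar>J n\<bar> \<le> 2 * Cd * P / (1 + (real n - M))" if "real n \<ge> M" for n
  proof -
    have "\<bar>J n\<bar> \<le> \<bar>\<integral>x. A1 (x + (- real n) *\<^sub>R v) $ k * \<phi> x \<partial>lborel\<bar> + \<bar>\<integral>x. A1 (x + real n *\<^sub>R v) $ k * \<phi> x \<partial>lborel\<bar>"
      unfolding Jeq by (simp add: algebra_simps)
    also have "\<dots> \<le> Cd / (1 + (real n - M)) * P + Cd / (1 + (real n - M)) * P"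
      using bnd1[of "- real n"] bnd1[of "real n"] that by simp
    finally show ?thesis by simp
  qed
  have lim1: "J \<longlonglongrightarrow> (\<integral>t. T t \<partial>lborel)"
    unfolding J_def
  proof (rule integral_dominated_convergence[where w="\<lambda>t. \<bar>T t\<bar>"])
    show "T \<in> borel_measurable lborel" using Tint' by auto
    show "\<And>n. (\<lambda>t. indicator {- real n..real n} t * T t) \<in> borel_measurable lborel" using Tint' by auto
    show "integrable lborel (\<lambda>t. \<bar>T t\<bar>)" using Tint' by auto
    show "AE t in lborel. (\<lambda>n. indicator {- real n..real n} t * T t) \<longlonglongrightarrow> T t"
    proof (rule AE_I2, rule tendsto_eventually)
      fix t :: real
      obtain N :: nat where "\<bar>t\<bar> \<le> real N" using real_arch_simple by blast
      then show "\<forall>\<^sub>F n in sequentially. indicator {- real n..real n} t * T t = T t"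
        unfolding eventually_sequentially by (intro exI[of _ N]) (auto simp: indicator_def)
    qed
    show "\<And>n. AE t in lborel. norm (indicator {- real n..real n} t * T t) \<le> \<bar>T t\<bar>"
      by (auto simp: indicator_def)
  qed
  have lim2: "J \<longlonglongrightarrow> 0"
  proof (rule Lim_null_comparison)
    show "\<forall>\<^sub>F n in sequentially. norm (J n) \<le> 2 * Cd * P / (1 + (real n - M))"
    proof -
      obtain N :: nat where "M \<le> real N" using real_arch_simple by blast
      then show ?thesis unfolding eventually_sequentially using Jb by (intro exI[of _ N]) auto
    qed
    have "LIM n sequentially. (1 - M) + real n :> at_top"
      by (rule filterlim_tendsto_add_at_top[OF tendsto_const filterlim_real_sequentially])
    then have "LIM n sequentially. 1 + (real n - M) :> at_infinity"
      by (intro filterlim_at_top_imp_at_infinity) (simp add: algebra_simps)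
    then show "(\<lambda>n. 2 * Cd * P / (1 + (real n - M))) \<longlonglongrightarrow> 0"
      by (rule tendsto_divide_0[OF tendsto_const])
  qed
  have "(\<integral>t. T t \<partial>lborel) = 0" using LIMSEQ_unique[OF lim1 lim2] .
  then show ?thesis unfolding T_def Dv_def .
qed

lemma cross_comp_meas:
  fixes B :: "real^3 \<Rightarrow> real^3"
  assumes [measurable]: "B \<in> borel_measurable borel"
  shows "(\<lambda>y. cross3 v (B y) $ k) \<in> borel_measurable borel"
proof -
  have "(\<lambda>y::real^3. cross3 v y $ k) \<in> borel_measurable borel"
    by (intro borel_measurable_continuous_onI continuous_intros continuous_on_cross)
  then show ?thesis using measurable_compose[of B borel borel] by auto
qed

lemma cross_meas:
  fixes B :: "real^3 \<Rightarrow> real^3"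
  assumes [measurable]: "B \<in> borel_measurable borel"
  shows "(\<lambda>y. cross3 v (B y)) \<in> borel_measurable borel"
proof -
  have "(\<lambda>y::real^3. cross3 v y) \<in> borel_measurable borel"
    by (intro borel_measurable_continuous_onI continuous_intros continuous_on_cross)
  then show ?thesis using measurable_compose[of B borel borel] by auto
qed

lemma norm_cross_le: "norm (cross3 v b) \<le> norm v * norm b"
proof -
  have "(norm (cross3 v b))^2 \<le> (norm v * norm b)^2" using norm_cross_dot[of v b]
    by (metis le_add_same_cancel1 zero_le_power2)
  then show ?thesis by (simp add: power2_le_iff_abs_le)
qed

lemma comp_id:
  fixes \<Lambda> :: "(real^3) set" and A B A1 :: "real^3 \<Rightarrow> real^3" and \<phi> :: "real^3 \<Rightarrow> real" and v :: "real^3"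
  assumes v: "norm v = 1"
    and A1m[measurable]: "A1 \<in> borel_measurable borel"
    and A1eq: "\<And>y. y \<in> \<Lambda> \<Longrightarrow> A1 y = A y" and A1out: "\<And>y. y \<notin> \<Lambda> \<Longrightarrow> A1 y = 0"
    and Adec: "\<And>y. y \<in> \<Lambda> \<Longrightarrow> norm (A y) \<le> C / (1 + norm y)"
    and Bm[measurable]: "B \<in> borel_measurable borel"
    and dc: "dist_curl \<Lambda> A B"
    and sm: "smooth3 \<phi>" and S: "S = tsupport3 \<phi>" and cS: "compact S"
    and SU: "\<And>x t. x \<in> S \<Longrightarrow> x + t *\<^sub>R v \<in> \<Lambda>"
    and M: "M \<ge> 0" "\<And>x. x \<in> S \<Longrightarrow> norm x \<le> M"
    and hA: "integrable lborel hA" "\<And>x t. norm x \<le> M \<Longrightarrow> x + t *\<^sub>R v \<in> \<Lambda> \<Longrightarrow> \<bar>v \<bullet> A (x + t *\<^sub>R v)\<bar> \<le> hA t"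
    and hB: "integrable lborel hB" "\<And>x t. norm x \<le> M \<Longrightarrow> x + t *\<^sub>R v \<in> \<Lambda> \<Longrightarrow> norm (B (x + t *\<^sub>R v)) \<le> hB t"
  shows "integrable lborel (\<lambda>x. pd k \<phi> x * (\<integral>t. v \<bullet> A (x + t *\<^sub>R v) \<partial>lborel))"
    and "integrable lborel (\<lambda>x. - (\<phi> x * (\<integral>t. cross3 v (B (x + t *\<^sub>R v)) \<partial>lborel) $ k))"
    and "(\<integral>x. pd k \<phi> x * (\<integral>t. v \<bullet> A (x + t *\<^sub>R v) \<partial>lborel) \<partial>lborel)
       = (\<integral>x. - (\<phi> x * (\<integral>t. cross3 v (B (x + t *\<^sub>R v)) \<partial>lborel) $ k) \<partial>lborel)"
proof -
  define D where "D = pd k \<phi>"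
  define Dv where "Dv = (\<lambda>x. grad3 \<phi> x \<bullet> v)"
  note pf = phi_facts(1,2,4,5)[OF sm S] phi_facts(3,6)[OF sm S, where v=v]
  have phz: "\<And>x. x \<notin> S \<Longrightarrow> \<phi> x = 0" and Dz: "\<And>x. x \<notin> S \<Longrightarrow> D x = 0"
    and Dvz: "\<And>x. x \<notin> S \<Longrightarrow> Dv x = 0"
    using pf unfolding Dv_def D_def by auto
  have phc: "continuous_on UNIV \<phi>" and Dc: "continuous_on UNIV D" and Dvc: "continuous_on UNIV Dv"
    using pf unfolding Dv_def D_def by auto
  have [measurable]: "\<phi> \<in> borel_measurable borel" "D \<in> borel_measurable borel" "Dv \<in> borel_measurable borel"
    using phc Dc Dvc by (auto intro: borel_measurable_continuous_onI)
  have [measurable]: "(\<lambda>y. cross3 v (B y) $ k) \<in> borel_measurable borel" by (rule cross_comp_meas) simp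
  have [measurable]: "(\<lambda>y. A1 y $ k) \<in> borel_measurable borel"
  proof -
    have "(\<lambda>y::real^3. y $ k) \<in> borel_measurable borel"
      by (intro borel_measurable_continuous_onI continuous_intros)
    then show ?thesis by (rule measurable_compose[OF A1m])
  qed
  have phi_int: "integrable lborel \<phi>" by (rule nice_int[OF phc cS phz])
  have D_int: "integrable lborel D" by (rule nice_int[OF Dc cS Dz])
  have Dv_int: "integrable lborel Dv" by (rule nice_int[OF Dvc cS Dvz])
  have A1dec: "norm (A1 y) \<le> \<bar>C\<bar> / (1 + norm y)" for y
  proof (cases "y \<in> \<Lambda>")
    case True
    then have "norm (A1 y) \<le> C / (1 + norm y)" using Adec A1eq by simp
    also have "\<dots> \<le> \<bar>C\<bar> / (1 + norm y)" by (intro divide_right_mono) (auto simp: add_nonneg_nonneg)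
    finally show ?thesis .
  qed (simp add: A1out add_nonneg_nonneg)
  have A1b: "norm (A1 y) \<le> \<bar>C\<bar>" for y
  proof -
    have "\<bar>C\<bar> / (1 + norm y) \<le> \<bar>C\<bar> / 1" by (intro divide_left_mono) (auto simp: add_pos_nonneg)
    then show ?thesis using A1dec[of y] by simp
  qed
  have A1kb: "\<bar>A1 y $ k\<bar> \<le> \<bar>C\<bar>" for y using A1b[of y] component_le_norm_cart[of "A1 y" k] by simp
  have A1kd: "\<bar>A1 y $ k\<bar> \<le> \<bar>C\<bar> / (1 + norm y)" for y using A1dec[of y] component_le_norm_cart[of "A1 y" k] by simp
  have A1vb: "\<bar>A1 y \<bullet> v\<bar> \<le> \<bar>C\<bar>" for y using Cauchy_Schwarz_ineq2[of "A1 y" v] A1b[of y] v by simp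
  define G1 where "G1 = (\<lambda>t x. (v \<bullet> A1 (x + t *\<^sub>R v)) * D x)"
  have G1m: "case_prod G1 \<in> borel_measurable (lborel \<Otimes>\<^sub>M lborel)" unfolding G1_def by measurable
  have G1b: "\<bar>G1 t x\<bar> \<le> hA t * \<bar>D x\<bar>" for t x
  proof (cases "x \<in> S")
    case True
    have "\<bar>v \<bullet> A1 (x + t *\<^sub>R v)\<bar> \<le> hA t" using A1eq[OF SU[OF True]] hA(2)[OF M(2)[OF True] SU[OF True]] by simp
    then show ?thesis unfolding G1_def abs_mult by (intro mult_right_mono) auto
  qed (simp add: G1_def Dz)
  note F1 = fub[OF G1m hA(1) D_int G1b]
  have in1: "(\<integral>t. G1 t x \<partial>lborel) = D x * (\<integral>t. v \<bullet> A (x + t *\<^sub>R v) \<partial>lborel)" for x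
  proof (cases "x \<in> S")
    case True
    have "(\<integral>t. G1 t x \<partial>lborel) = (\<integral>t. v \<bullet> A1 (x + t *\<^sub>R v) \<partial>lborel) * D x" unfolding G1_def by simp
    also have "(\<integral>t. v \<bullet> A1 (x + t *\<^sub>R v) \<partial>lborel) = (\<integral>t. v \<bullet> A (x + t *\<^sub>R v) \<partial>lborel)"
      using A1eq[OF SU[OF True]] by simp
    finally show ?thesis by simp
  qed (simp add: G1_def Dz)
  define G3 where "G3 = (\<lambda>t x. - (\<phi> x * (cross3 v (B (x + t *\<^sub>R v)) $ k)))"
  have G3m: "case_prod G3 \<in> borel_measurable (lborel \<Otimes>\<^sub>M lborel)" unfolding G3_def by measurable
  have G3b: "\<bar>G3 t x\<bar> \<le> hB t * \<bar>\<phi> x\<bar>" for t x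
  proof (cases "x \<in> S")
    case True
    have "\<bar>cross3 v (B (x + t *\<^sub>R v)) $ k\<bar> \<le> norm (cross3 v (B (x + t *\<^sub>R v)))" by (rule component_le_norm_cart)
    also have "\<dots> \<le> norm (B (x + t *\<^sub>R v))" using norm_cross_le[of v] v by simp
    also have "\<dots> \<le> hB t" using hB(2)[OF M(2)[OF True] SU[OF True]] .
    finally show ?thesis unfolding G3_def abs_minus_cancel abs_mult by (subst mult.commute) (intro mult_right_mono, auto)
  qed (simp add: G3_def phz)
  note F3 = fub[OF G3m hB(1) phi_int G3b]
  have in3: "(\<integral>t. G3 t x \<partial>lborel) = - (\<phi> x * (\<integral>t. cross3 v (B (x + t *\<^sub>R v)) \<partial>lborel) $ k)" for x
  proof (cases "x \<in> S")
    case True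
    have ci: "integrable lborel (\<lambda>t. cross3 v (B (x + t *\<^sub>R v)))"
    proof (rule Bochner_Integration.integrable_bound[OF hB(1)])
      have "(\<lambda>y. cross3 v (B y)) \<in> borel_measurable borel" by (rule cross_meas) simp
      then show "(\<lambda>t. cross3 v (B (x + t *\<^sub>R v))) \<in> borel_measurable lborel" by measurable
      show "AE t in lborel. norm (cross3 v (B (x + t *\<^sub>R v))) \<le> norm (hB t)"
      proof (rule AE_I2)
        fix t
        have "norm (cross3 v (B (x + t *\<^sub>R v))) \<le> norm (B (x + t *\<^sub>R v))" using norm_cross_le[of v] v by simp
        also have "\<dots> \<le> hB t" using hB(2)[OF M(2)[OF True] SU[OF True]] .
        finally show "norm (cross3 v (B (x + t *\<^sub>R v))) \<le> norm (hB t)" by simp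
      qed
    qed
    show ?thesis unfolding G3_def comp_int[OF ci] by simp
  qed (simp add: G3_def phz)
  define T where "T = (\<lambda>t. \<integral>x. A1 (t *\<^sub>R v + x) $ k * (grad3 \<phi> x \<bullet> v) \<partial>lborel)"
  have pert: "(\<integral>x. G1 t x \<partial>lborel) - T t = (\<integral>x. G3 t x \<partial>lborel)" for t
  proof -
    define w where "w = t *\<^sub>R v"
    have sub: "(\<lambda>x. w + x) ` tsupport3 \<phi> \<subseteq> \<Lambda>" using SU unfolding S w_def by (auto simp: add.commute)
    note E = E_tau[OF dc sm cS[unfolded S] sub, of v k]
    have e1: "(A y \<bullet> v) * pd k \<phi> (y - w) - A y $ k * (grad3 \<phi> (y - w) \<bullet> v)
            = (A1 y \<bullet> v) * D (y - w) - A1 y $ k * Dv (y - w)" for y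
    proof (cases "y - w \<in> S")
      case True
      then have "y \<in> \<Lambda>" using SU[OF True, of t] unfolding w_def by simp
      then show ?thesis using A1eq unfolding D_def Dv_def by simp
    next
      case False then show ?thesis using Dz Dvz unfolding D_def Dv_def by simp
    qed
    have "(\<integral>y. (A1 y \<bullet> v) * D (y - w) - A1 y $ k * Dv (y - w) \<partial>lborel)
        = (\<integral>x. (A1 (w + x) \<bullet> v) * D (w + x - w) - A1 (w + x) $ k * Dv (w + x - w) \<partial>lborel)"
      by (rule integral_transl) measurable
    also have "\<dots> = (\<integral>x. (A1 (w + x) \<bullet> v) * D x - A1 (w + x) $ k * Dv x \<partial>lborel)" by simp
    also have "\<dots> = (\<integral>x. (A1 (w + x) \<bullet> v) * D x \<partial>lborel) - (\<integral>x. A1 (w + x) $ k * Dv x \<partial>lborel)"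
    proof (rule Bochner_Integration.integral_diff)
      show "integrable lborel (\<lambda>x. (A1 (w + x) \<bullet> v) * D x)"
      proof (rule Bochner_Integration.integrable_bound)
        show "integrable lborel (\<lambda>x. \<bar>C\<bar> * D x)" using D_int by simp
        show "(\<lambda>x. (A1 (w + x) \<bullet> v) * D x) \<in> borel_measurable lborel" by measurable
        show "AE x in lborel. norm ((A1 (w + x) \<bullet> v) * D x) \<le> norm (\<bar>C\<bar> * D x)"
          using A1vb by (auto simp: abs_mult intro!: mult_right_mono)
      qed
      show "integrable lborel (\<lambda>x. A1 (w + x) $ k * Dv x)"
      proof (rule Bochner_Integration.integrable_bound)
        show "integrable lborel (\<lambda>x. \<bar>C\<bar> * Dv x)" using Dv_int by simp
        show "(\<lambda>x. A1 (w + x) $ k * Dv x) \<in> borel_measurable lborel" by measurable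
        show "AE x in lborel. norm (A1 (w + x) $ k * Dv x) \<le> norm (\<bar>C\<bar> * Dv x)"
          using A1kb by (auto simp: abs_mult intro!: mult_right_mono)
      qed
    qed
    also have "(\<integral>x. (A1 (w + x) \<bullet> v) * D x \<partial>lborel) = (\<integral>x. G1 t x \<partial>lborel)"
      unfolding G1_def w_def by (simp add: inner_commute add.commute)
    also have "(\<integral>x. A1 (w + x) $ k * Dv x \<partial>lborel) = T t" unfolding T_def w_def Dv_def ..
    finally have l: "(\<integral>y. (A y \<bullet> v) * pd k \<phi> (y - w) - A y $ k * (grad3 \<phi> (y - w) \<bullet> v) \<partial>lborel)
        = (\<integral>x. G1 t x \<partial>lborel) - T t" unfolding e1 .
    have "(\<integral>y. - (\<phi> (y - w) * (cross3 v (B y) $ k)) \<partial>lborel)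
        = (\<integral>x. - (\<phi> (w + x - w) * (cross3 v (B (w + x)) $ k)) \<partial>lborel)"
      by (rule integral_transl) measurable
    also have "\<dots> = (\<integral>x. G3 t x \<partial>lborel)" unfolding G3_def w_def by (simp add: add.commute)
    finally have r: "(\<integral>y. - (\<phi> (y - w) * (cross3 v (B y) $ k)) \<partial>lborel) = (\<integral>x. G3 t x \<partial>lborel)" .
    show ?thesis using E l r by simp
  qed
  have Tint: "integrable lborel T"
  proof -
    have "integrable lborel (\<lambda>t. (\<integral>x. G1 t x \<partial>lborel) - (\<integral>x. G3 t x \<partial>lborel))"
      using F1(2) F3(2) by (rule Bochner_Integration.integrable_diff)
    moreover have "(\<lambda>t. (\<integral>x. G1 t x \<partial>lborel) - (\<integral>x. G3 t x \<partial>lborel)) = T"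
      using pert by (auto simp: fun_eq_iff algebra_simps)
    ultimately show ?thesis by simp
  qed
  have T0: "(\<integral>t. T t \<partial>lborel) = 0" unfolding T_def
    by (rule T_zero[OF v _ A1kb A1kd _ sm S cS M]) (use Tint in \<open>auto simp: T_def\<close>)
  have "(\<integral>t. (\<integral>x. G1 t x \<partial>lborel) \<partial>lborel) = (\<integral>t. T t + (\<integral>x. G3 t x \<partial>lborel) \<partial>lborel)"
    using pert by (auto simp: algebra_simps intro!: Bochner_Integration.integral_cong)
  also have "\<dots> = (\<integral>t. T t \<partial>lborel) + (\<integral>t. (\<integral>x. G3 t x \<partial>lborel) \<partial>lborel)"
    using Tint F3(2) by (rule Bochner_Integration.integral_add)
  finally have key: "(\<integral>t. (\<integral>x. G1 t x \<partial>lborel) \<partial>lborel) = (\<integral>t. (\<integral>x. G3 t x \<partial>lborel) \<partial>lborel)"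
    using T0 by simp
  show "integrable lborel (\<lambda>x. pd k \<phi> x * (\<integral>t. v \<bullet> A (x + t *\<^sub>R v) \<partial>lborel))"
    using F1(3) unfolding in1 D_def .
  show "integrable lborel (\<lambda>x. - (\<phi> x * (\<integral>t. cross3 v (B (x + t *\<^sub>R v)) \<partial>lborel) $ k))"
    using F3(3) unfolding in3 .
  show "(\<integral>x. pd k \<phi> x * (\<integral>t. v \<bullet> A (x + t *\<^sub>R v) \<partial>lborel) \<partial>lborel)
       = (\<integral>x. - (\<phi> x * (\<integral>t. cross3 v (B (x + t *\<^sub>R v)) \<partial>lborel) $ k) \<partial>lborel)"
    using key F1(4) F3(4) unfolding in1 in3 D_def by simp
qed

lemma vec_int:
  fixes F :: "'a \<Rightarrow> real^3"
  assumes "\<And>k. integrable M (\<lambda>x. F x $ k)"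
  shows "(\<integral>x. F x \<partial>M) = (\<Sum>k\<in>UNIV. (\<integral>x. F x $ k \<partial>M) *\<^sub>R axis k 1)"
proof -
  have "\<And>x. F x = (\<Sum>k\<in>UNIV. (F x $ k) *\<^sub>R axis k 1)"
  proof -
    fix x
    have "(\<Sum>i\<in>UNIV. F x $ i *s axis i 1) = F x" by (rule basis_expansion)
    then show "F x = (\<Sum>k\<in>UNIV. (F x $ k) *\<^sub>R axis k 1)" by (simp add: scalar_mult_eq_scaleR)
  qed
  then have "(\<integral>x. F x \<partial>M) = (\<integral>x. (\<Sum>k\<in>UNIV. (F x $ k) *\<^sub>R axis k 1) \<partial>M)" by simp
  also have "\<dots> = (\<Sum>k\<in>UNIV. (\<integral>x. (F x $ k) *\<^sub>R axis k 1 \<partial>M))"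
    by (rule Bochner_Integration.integral_sum) (use assms in auto)
  also have "\<dots> = (\<Sum>k\<in>UNIV. (\<integral>x. F x $ k \<partial>M) *\<^sub>R axis k 1)" using assms by (simp add: integral_scaleR_left)
  finally show ?thesis .
qed

theorem lemma6p2:
  fixes K :: "(real^3) set" and N :: nat and gam :: "nat \<Rightarrow> real \<Rightarrow> real^3"
    and \<Phi> :: "nat \<Rightarrow> real" and B A :: "real^3 \<Rightarrow> real^3" and \<mu> :: real and v :: "real^3"
  assumes "smooth_boundary_domain K"
    and "\<forall>j<N. valid_path (gam j) \<and> pathfinish (gam j) = pathstart (gam j)
               \<and> path_image (gam j) \<subseteq> - K"
    and "magnetic_ok (- K) B \<mu>"
    and "A \<in> vpot_class (- K) N gam \<Phi> B"
    and "norm v = 1"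
  shows "(\<forall>x\<in>Lambda_dir (- K) v.
            integrable lborel (\<lambda>\<tau>. v \<bullet> A (x + \<tau> *\<^sub>R v)) \<and>
            integrable lborel (\<lambda>\<tau>. cross3 v (B (x + \<tau> *\<^sub>R v))))
       \<and> dist_grad (Lambda_dir (- K) v)
           (\<lambda>x. \<integral>\<tau>. v \<bullet> A (x + \<tau> *\<^sub>R v) \<partial>lborel)
           (\<lambda>x. \<integral>\<tau>. cross3 v (B (x + \<tau> *\<^sub>R v)) \<partial>lborel)"
proof -
  define \<Lambda> where "\<Lambda> = - K"
  define U where "U = Lambda_dir \<Lambda> v"
  have v: "norm v = 1" using assms(5) .
  have cK: "compact K" using assms(1) unfolding smooth_boundary_domain_def by blast
  have oL: "open \<Lambda>" unfolding \<Lambda>_def using compact_imp_closed[OF cK] by (simp add: open_Compl)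
  have Bm': "B \<in> borel_measurable lborel" and mu: "\<mu> > 2"
    and "\<exists>C. \<forall>x\<in>\<Lambda>. norm (B x) \<le> C * (1 + norm x) powr (-\<mu>)"
    using assms(3) unfolding magnetic_ok_def \<Lambda>_def by blast+
  then obtain CB where CB: "\<forall>x\<in>\<Lambda>. norm (B x) \<le> CB * (1 + norm x) powr (-\<mu>)" by blast
  have Bm[measurable]: "B \<in> borel_measurable borel" using Bm' by simp
  have Ac: "continuous_on (closure \<Lambda>) A" and "\<exists>C. \<forall>x\<in>closure \<Lambda>. norm (A x) \<le> C / (1 + norm x)"
    and wi: "set_integrable lborel {0<..}
       (\<lambda>r::real. Sup {\<bar>A x \<bullet> (x /\<^sub>R norm x)\<bar> | x. x \<in> \<Lambda> \<and> norm x \<ge> r})"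
    and dc: "dist_curl \<Lambda> A B"
    using assms(4) unfolding vpot_class_def \<Lambda>_def by blast+
  then obtain CA where CA: "\<forall>x\<in>closure \<Lambda>. norm (A x) \<le> CA / (1 + norm x)" by blast
  have CA': "\<forall>x\<in>\<Lambda>. norm (A x) \<le> CA / (1 + norm x)" using CA closure_subset by blast
  have AcL: "continuous_on \<Lambda> A" using Ac closure_subset continuous_on_subset by blast
  have UL: "\<And>x t. x \<in> U \<Longrightarrow> x + t *\<^sub>R v \<in> \<Lambda>" unfolding U_def Lambda_dir_def by blast
  have part1: "integrable lborel (\<lambda>\<tau>. v \<bullet> A (x + \<tau> *\<^sub>R v)) \<and> integrable lborel (\<lambda>\<tau>. cross3 v (B (x + \<tau> *\<^sub>R v)))"
    if xU: "x \<in> U" for x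
  proof
    obtain hA where hA: "integrable lborel hA" "\<forall>y t. norm y \<le> norm x \<longrightarrow> y + t *\<^sub>R v \<in> \<Lambda> \<longrightarrow> \<bar>v \<bullet> A (y + t *\<^sub>R v)\<bar> \<le> hA t"
      using LB_A[OF v norm_ge_zero CA' wi] by blast
    obtain hB where hB: "integrable lborel hB" "\<forall>y t. norm y \<le> norm x \<longrightarrow> y + t *\<^sub>R v \<in> \<Lambda> \<longrightarrow> norm (B (y + t *\<^sub>R v)) \<le> hB t"
      using LB_B[OF v norm_ge_zero mu CB] by blast
    have "continuous_on UNIV (\<lambda>t. A (x + t *\<^sub>R v))"
      by (rule continuous_on_compose2[OF AcL]) (use UL[OF xU] in \<open>auto intro!: continuous_intros\<close>)
    then have "continuous_on UNIV (\<lambda>t. v \<bullet> A (x + t *\<^sub>R v))" by (auto intro!: continuous_intros)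
    then have m1: "(\<lambda>t. v \<bullet> A (x + t *\<^sub>R v)) \<in> borel_measurable lborel"
      using borel_measurable_continuous_onI by simp
    show "integrable lborel (\<lambda>\<tau>. v \<bullet> A (x + \<tau> *\<^sub>R v))"
      by (rule Bochner_Integration.integrable_bound[OF hA(1) m1]) (use hA(2) UL[OF xU] in \<open>auto intro!: AE_I2 order.trans[OF _ abs_ge_self]\<close>)
    have [measurable]: "(\<lambda>y. cross3 v (B y)) \<in> borel_measurable borel" by (rule cross_meas) simp
    have m2: "(\<lambda>t. cross3 v (B (x + t *\<^sub>R v))) \<in> borel_measurable lborel" by measurable
    show "integrable lborel (\<lambda>\<tau>. cross3 v (B (x + \<tau> *\<^sub>R v)))"
    proof (rule Bochner_Integration.integrable_bound[OF hB(1) m2], rule AE_I2)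
      fix t
      have "norm (cross3 v (B (x + t *\<^sub>R v))) \<le> norm (B (x + t *\<^sub>R v))" using norm_cross_le[of v] v by simp
      also have "\<dots> \<le> hB t" using hB(2) UL[OF xU] by blast
      finally show "norm (cross3 v (B (x + t *\<^sub>R v))) \<le> norm (hB t)" by simp
    qed
  qed
  have part2: "dist_grad U (\<lambda>x. \<integral>\<tau>. v \<bullet> A (x + \<tau> *\<^sub>R v) \<partial>lborel) (\<lambda>x. \<integral>\<tau>. cross3 v (B (x + \<tau> *\<^sub>R v)) \<partial>lborel)"
    unfolding dist_grad_def
  proof (intro allI impI)
    fix \<phi> assume tf: "test_fun U \<phi>"
    define S where "S = tsupport3 \<phi>"
    have sm: "smooth3 \<phi>" and cS: "compact S" and SU0: "S \<subseteq> U" using tf unfolding test_fun_def S_def by auto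
    obtain M0 where M0: "\<forall>x\<in>S. norm x \<le> M0" using compact_imp_bounded[OF cS] bounded_iff by metis
    define M where "M = max M0 0"
    have M: "M \<ge> 0" "\<And>x. x \<in> S \<Longrightarrow> norm x \<le> M" using M0 unfolding M_def by force+
    have SU: "\<And>x t. x \<in> S \<Longrightarrow> x + t *\<^sub>R v \<in> \<Lambda>" using SU0 UL by blast
    define A1 where "A1 = (\<lambda>y. indicator \<Lambda> y *\<^sub>R A y)"
    have A1m: "A1 \<in> borel_measurable borel" unfolding A1_def
      by (rule borel_measurable_continuous_on_indicator[OF _ AcL]) (use oL in auto)
    have A1eq: "\<And>y. y \<in> \<Lambda> \<Longrightarrow> A1 y = A y" and A1out: "\<And>y. y \<notin> \<Lambda> \<Longrightarrow> A1 y = 0"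
      unfolding A1_def by auto
    obtain hA where hA: "integrable lborel hA" "\<forall>y t. norm y \<le> M \<longrightarrow> y + t *\<^sub>R v \<in> \<Lambda> \<longrightarrow> \<bar>v \<bullet> A (y + t *\<^sub>R v)\<bar> \<le> hA t"
      using LB_A[OF v M(1) CA' wi] by blast
    obtain hB where hB: "integrable lborel hB" "\<forall>y t. norm y \<le> M \<longrightarrow> y + t *\<^sub>R v \<in> \<Lambda> \<longrightarrow> norm (B (y + t *\<^sub>R v)) \<le> hB t"
      using LB_B[OF v M(1) mu CB] by blast
    note CI = comp_id[OF v A1m A1eq A1out CA'[rule_format] Bm dc sm S_def cS SU M hA(1) _ hB(1)]
    have I1: "\<And>k. integrable lborel (\<lambda>x. pd k \<phi> x * (\<integral>t. v \<bullet> A (x + t *\<^sub>R v) \<partial>lborel))"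
      and I3: "\<And>k. integrable lborel (\<lambda>x. - (\<phi> x * (\<integral>t. cross3 v (B (x + t *\<^sub>R v)) \<partial>lborel) $ k))"
      and EQ: "\<And>k. (\<integral>x. pd k \<phi> x * (\<integral>t. v \<bullet> A (x + t *\<^sub>R v) \<partial>lborel) \<partial>lborel)
       = (\<integral>x. - (\<phi> x * (\<integral>t. cross3 v (B (x + t *\<^sub>R v)) \<partial>lborel) $ k) \<partial>lborel)"
      using CI hA(2) hB(2) by blast+
    have L: "(\<integral>x. (\<integral>\<tau>. v \<bullet> A (x + \<tau> *\<^sub>R v) \<partial>lborel) *\<^sub>R grad3 \<phi> x \<partial>lborel)
      = (\<Sum>k\<in>UNIV. (\<integral>x. pd k \<phi> x * (\<integral>t. v \<bullet> A (x + t *\<^sub>R v) \<partial>lborel) \<partial>lborel) *\<^sub>R axis k 1)"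
    proof -
      have "(\<integral>x. (\<integral>\<tau>. v \<bullet> A (x + \<tau> *\<^sub>R v) \<partial>lborel) *\<^sub>R grad3 \<phi> x \<partial>lborel)
        = (\<Sum>k\<in>UNIV. (\<integral>x. ((\<integral>\<tau>. v \<bullet> A (x + \<tau> *\<^sub>R v) \<partial>lborel) *\<^sub>R grad3 \<phi> x) $ k \<partial>lborel) *\<^sub>R axis k 1)"
        by (rule vec_int[where F="\<lambda>x. (\<integral>\<tau>. v \<bullet> A (x + \<tau> *\<^sub>R v) \<partial>lborel) *\<^sub>R grad3 \<phi> x"]) (use I1 in \<open>simp add: grad3_def mult.commute\<close>)
      then show ?thesis by (simp add: grad3_def mult.commute)
    qed
    have R: "(\<integral>x. \<phi> x *\<^sub>R (\<integral>\<tau>. cross3 v (B (x + \<tau> *\<^sub>R v)) \<partial>lborel) \<partial>lborel)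
      = (\<Sum>k\<in>UNIV. (\<integral>x. \<phi> x * (\<integral>t. cross3 v (B (x + t *\<^sub>R v)) \<partial>lborel) $ k \<partial>lborel) *\<^sub>R axis k 1)"
    proof -
      have "(\<integral>x. \<phi> x *\<^sub>R (\<integral>\<tau>. cross3 v (B (x + \<tau> *\<^sub>R v)) \<partial>lborel) \<partial>lborel)
        = (\<Sum>k\<in>UNIV. (\<integral>x. (\<phi> x *\<^sub>R (\<integral>\<tau>. cross3 v (B (x + \<tau> *\<^sub>R v)) \<partial>lborel)) $ k \<partial>lborel) *\<^sub>R axis k 1)"
      proof (rule vec_int[where F="\<lambda>x. \<phi> x *\<^sub>R (\<integral>\<tau>. cross3 v (B (x + \<tau> *\<^sub>R v)) \<partial>lborel)"])
        fix k show "integrable lborel (\<lambda>x. (\<phi> x *\<^sub>R (\<integral>\<tau>. cross3 v (B (x + \<tau> *\<^sub>R v)) \<partial>lborel)) $ k)"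
          using I3[of k] by simp
      qed
      then show ?thesis by simp
    qed
    show "(\<integral>x. (\<integral>\<tau>. v \<bullet> A (x + \<tau> *\<^sub>R v) \<partial>lborel) *\<^sub>R grad3 \<phi> x \<partial>lborel) =
          - (\<integral>x. \<phi> x *\<^sub>R (\<integral>\<tau>. cross3 v (B (x + \<tau> *\<^sub>R v)) \<partial>lborel) \<partial>lborel)"
      unfolding L R EQ by (simp add: sum_negf[symmetric])
  qed
  show ?thesis using part1 part2 unfolding U_def \<Lambda>_def by blast
qed

end
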